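(* Let $\mathcal O$ be any quantum algorithm (unitary, using no measurements) such that for every $x$, $\mathcal O\ket{x}\ket{\mathbf 0}=\ket{x}\ket{\Psi_x}=\ket{x}(\ket{\Psi_x^1}+\ket{\Psi_x^0})$, and let $\chi:\mathbb Z\to\{0,1\}$ be a Boolean function such that $\ket{\Psi_x^1}$ (the good part) and $\ket{\Psi_x^0}$ (the bad part) are the components of $\ket{\Psi_x}$ on computational basis states $\ket{z}$ with $\chi(z)=1$ and $\chi(z)=0$ respectively, where $\sin^2(\theta_x)=\langle\Psi_x^1|\Psi_x^1\rangle$ with $0<\theta_x\le\pi/2$ for every $x$. Let $M\ge1$ be an integer. Then there exists a quantum algorithm $Par\_Est\_Zero(\mathcal O,\chi,M)$ that maps $\ket{x}\ket{\mathbf 0}\ket{0}\mapsto\ket{x}\otimes\big(\alpha_x\ket{u_x}\ket{1}+\beta_x\ket{u'_x}\ket{0}\big)$ (with normalized states $\ket{u_x},\ket{u'_x}$), where for every $x$, $|\alpha_x|^2=\dfrac{\sin^2(M\theta_x)}{M^2\sin^2(\theta_x)}$. It uses $\mathcal O$ and its inverse $O(M)$ times. *)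

theory Defs
  imports Complex_Main
begin

text \<open>A finite-dimensional state space is given by a finite set S of basis labels;
  states are functions S \<Rightarrow> complex (zero outside S); linear operators are
  matrices given as kernels K i j (row i, column j).\<close>

type_synonym 'i kernel = "'i \<Rightarrow> 'i \<Rightarrow> complex"

definition ket :: "'i \<Rightarrow> 'i \<Rightarrow> complex" where
  "ket j = (\<lambda>i. if i = j then 1 else 0)"

definition apply_op :: "'i set \<Rightarrow> 'i kernel \<Rightarrow> ('i \<Rightarrow> complex) \<Rightarrow> ('i \<Rightarrow> complex)" where
  "apply_op S K v = (\<lambda>i. if i \<in> S then (\<Sum>j\<in>S. K i j * v j) else 0)"

definition adj :: "'i kernel \<Rightarrow> 'i kernel" where
  "adj K = (\<lambda>i j. cnj (K j i))"

definition unitary_on :: "'i set \<Rightarrow> 'i kernel \<Rightarrow> bool" where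
  "unitary_on S K \<longleftrightarrow> finite S \<and> (\<forall>i j. (i \<notin> S \<or> j \<notin> S) \<longrightarrow> K i j = 0) \<and>
     (\<forall>i\<in>S. \<forall>j\<in>S. (\<Sum>k\<in>S. cnj (K k i) * K k j) = (if i = j then 1 else 0))"

text \<open>Registers of the algorithm: input x, workspace z of the oracle, an extra
  ancilla register a, and the output flag qubit b.\<close>
type_synonym idx = "nat \<times> nat \<times> nat \<times> bool"

definition space :: "nat \<Rightarrow> nat \<Rightarrow> nat \<Rightarrow> idx set" where
  "space nx nz na = {0..<nx} \<times> {0..<nz} \<times> {0..<na} \<times> (UNIV :: bool set)"

definition lift :: "(nat \<times> nat) kernel \<Rightarrow> idx kernel" where
  "lift Or = (\<lambda>(x,z,a,b) (x',z',a',b'). if a = a' \<and> b = b' then Or (x,z) (x',z') else 0)"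

datatype gate = Query | QueryInv | Fixed "idx kernel"

fun gate_kernel :: "(nat \<times> nat) kernel \<Rightarrow> gate \<Rightarrow> idx kernel" where
  "gate_kernel Or Query = lift Or"
| "gate_kernel Or QueryInv = lift (adj Or)"
| "gate_kernel Or (Fixed U) = U"

fun gate_ok :: "idx set \<Rightarrow> gate \<Rightarrow> bool" where
  "gate_ok S (Fixed U) = unitary_on S U"
| "gate_ok S _ = True"

fun is_query :: "gate \<Rightarrow> bool" where
  "is_query (Fixed U) = False"
| "is_query _ = True"

definition num_queries :: "gate list \<Rightarrow> nat" where
  "num_queries gs = length (filter is_query gs)"

text \<open>Run a gate list (first gate applied first) on an initial state.\<close>
fun run :: "idx set \<Rightarrow> (nat \<times> nat) kernel \<Rightarrow> gate list \<Rightarrow> (idx \<Rightarrow> complex) \<Rightarrow> (idx \<Rightarrow> complex)" where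
  "run S Or [] v = v"
| "run S Or (g # gs) v = run S Or gs (apply_op S (gate_kernel Or g) v)"

end

theory Submission
  imports Defs
begin
lemma mult_cnj_cmod: "z * cnj z = complex_of_real ((cmod z)\<^sup>2)"
  by (simp add: complex_mult_cnj cmod_power2)

lemma unitary_right:
  assumes U: "unitary_on S K" and i: "i \<in> S" and j: "j \<in> S"
  shows "(\<Sum>k\<in>S. K i k * cnj (K j k)) = (if i = j then 1 else 0)"
proof -
  have fin: "finite S" and col: "\<And>i j. i\<in>S \<Longrightarrow> j\<in>S \<Longrightarrow> (\<Sum>k\<in>S. cnj (K k i) * K k j) = (if i = j then 1 else 0)"
    using U unfolding unitary_on_def by auto
  define P where "P i j = (\<Sum>k\<in>S. K i k * cnj (K j k))" for i j
  define E where "E i j = (if i = j then 1 else 0) - P i j" for i j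
  have herm: "E j i = cnj (E i j)" for i j
    unfolding E_def P_def by (auto simp: mult.commute)
  have trP: "(\<Sum>i\<in>S. P i i) = of_nat (card S)"
  proof -
    have "(\<Sum>i\<in>S. P i i) = (\<Sum>k\<in>S. \<Sum>i\<in>S. cnj (K i k) * K i k)"
      unfolding P_def by (subst sum.swap) (simp add: mult.commute)
    also have "\<dots> = (\<Sum>k\<in>S. 1)" using col by (intro sum.cong) auto
    finally show ?thesis by simp
  qed
  have trE: "(\<Sum>i\<in>S. E i i) = 0"
    unfolding E_def using trP by (simp add: sum_subtractf)
  have PP: "(\<Sum>k\<in>S. P i k * P k j) = P i j" for i j
  proof -
    have "(\<Sum>k\<in>S. P i k * P k j) = (\<Sum>k\<in>S. \<Sum>l\<in>S. \<Sum>m\<in>S. K i l * (cnj (K k l) * K k m) * cnj (K j m))"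
      unfolding P_def by (simp add: sum_product mult.assoc mult.left_commute)
    also have "\<dots> = (\<Sum>l\<in>S. \<Sum>m\<in>S. \<Sum>k\<in>S. K i l * (cnj (K k l) * K k m) * cnj (K j m))"
      by (subst sum.swap, rule sum.cong, rule refl, rule sum.swap)
    also have "\<dots> = (\<Sum>l\<in>S. \<Sum>m\<in>S. K i l * (\<Sum>k\<in>S. cnj (K k l) * K k m) * cnj (K j m))"
      by (simp add: sum_distrib_left sum_distrib_right)
    also have "\<dots> = (\<Sum>l\<in>S. \<Sum>m\<in>S. (if l = m then K i l * cnj (K j m) else 0))"
      using col by (intro sum.cong) auto
    also have "\<dots> = P i j" unfolding P_def using fin by simp
    finally show ?thesis .
  qed
  have EE: "(\<Sum>k\<in>S. E i k * E k j) = E i j" if "i \<in> S" "j \<in> S" for i j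
  proof -
    have "(\<Sum>k\<in>S. E i k * E k j) = (\<Sum>k\<in>S. (if k = i then (if k = j then 1 else 0) else 0))
       - (\<Sum>k\<in>S. (if k = i then P k j else 0)) - (\<Sum>k\<in>S. (if k = j then P i k else 0)) + (\<Sum>k\<in>S. P i k * P k j)"
      unfolding E_def by (simp add: sum.distrib[symmetric] sum_subtractf[symmetric], intro sum.cong) (auto simp: algebra_simps)
    also have "\<dots> = (if i = j then 1 else 0) - P i j - P i j + P i j"
      using that fin PP[of i j] by simp
    finally show ?thesis unfolding E_def by simp
  qed
  have "(\<Sum>i\<in>S. \<Sum>j\<in>S. E i j * cnj (E i j)) = (\<Sum>i\<in>S. E i i)"
    by (intro sum.cong refl) (simp add: herm[symmetric] EE)
  hence "(\<Sum>i\<in>S. \<Sum>j\<in>S. complex_of_real ((cmod (E i j))\<^sup>2)) = 0"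
    using trE by (simp only: mult_cnj_cmod)
  hence "(\<Sum>i\<in>S. \<Sum>j\<in>S. (cmod (E i j))\<^sup>2) = 0"
    by (simp only: of_real_sum[symmetric] of_real_eq_0_iff)
  hence "\<forall>i\<in>S. (\<Sum>j\<in>S. (cmod (E i j))\<^sup>2) = 0"
    using fin by (subst sum_nonneg_eq_0_iff[symmetric]) (auto intro: sum_nonneg)
  hence "(cmod (E i j))\<^sup>2 = 0" using fin i j by (simp add: sum_nonneg_eq_0_iff)
  hence "E i j = 0" by simp
  thus ?thesis unfolding E_def P_def by (simp split: if_splits)
qed

definition diagk :: "'i set \<Rightarrow> ('i \<Rightarrow> complex) \<Rightarrow> 'i kernel" where
  "diagk S d = (\<lambda>i j. if i = j \<and> i \<in> S then d i else 0)"

definition permk :: "'i set \<Rightarrow> ('i \<Rightarrow> 'i) \<Rightarrow> 'i kernel" where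
  "permk S \<sigma> = (\<lambda>i j. if j \<in> S \<and> i = \<sigma> j then 1 else 0)"

lemma unitary_diag:
  assumes "finite S" "\<And>i. i \<in> S \<Longrightarrow> cnj (d i) * d i = 1"
  shows "unitary_on S (diagk S d)"
proof -
  have "(\<Sum>k\<in>S. cnj (diagk S d k i) * diagk S d k j) = (if i = j then 1 else 0)"
    if "i \<in> S" "j \<in> S" for i j
  proof -
    have "(\<Sum>k\<in>S. cnj (diagk S d k i) * diagk S d k j) = (\<Sum>k\<in>S. if k = i then (if i = j then cnj (d i) * d i else 0) else 0)"
      by (intro sum.cong) (auto simp: diagk_def)
    thus ?thesis using that assms by simp
  qed
  thus ?thesis using assms unfolding unitary_on_def diagk_def by auto
qed

lemma apply_diag: assumes "finite S" shows "apply_op S (diagk S d) v = (\<lambda>i. if i \<in> S then d i * v i else 0)"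
proof -
  have "(\<Sum>j\<in>S. diagk S d i j * v j) = (\<Sum>j\<in>S. if j = i then d i * v i else 0)" if "i \<in> S" for i
    by (intro sum.cong) (auto simp: diagk_def that)
  thus ?thesis unfolding apply_op_def using assms by (auto intro!: ext)
qed

lemma unitary_perm:
  assumes "finite S" "\<And>i. i \<in> S \<Longrightarrow> \<sigma> i \<in> S" "\<And>i. i \<in> S \<Longrightarrow> \<sigma> (\<sigma> i) = i"
  shows "unitary_on S (permk S \<sigma>)"
proof -
  have "(\<Sum>k\<in>S. cnj (permk S \<sigma> k i) * permk S \<sigma> k j) = (if i = j then 1 else 0)"
    if "i \<in> S" "j \<in> S" for i j
  proof -
    have "(\<Sum>k\<in>S. cnj (permk S \<sigma> k i) * permk S \<sigma> k j) = (\<Sum>k\<in>S. if k = \<sigma> i then (if i = j then 1 else 0) else 0)"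
      using that assms by (intro sum.cong) (auto simp: permk_def, metis)
    thus ?thesis using that assms by simp
  qed
  thus ?thesis using assms unfolding unitary_on_def permk_def by auto
qed

lemma apply_perm:
  assumes "finite S" "\<And>i. i \<in> S \<Longrightarrow> \<sigma> i \<in> S" "\<And>i. i \<in> S \<Longrightarrow> \<sigma> (\<sigma> i) = i"
  shows "apply_op S (permk S \<sigma>) v = (\<lambda>i. if i \<in> S then v (\<sigma> i) else 0)"
proof -
  have "(\<Sum>j\<in>S. permk S \<sigma> i j * v j) = (\<Sum>j\<in>S. if j = \<sigma> i then v (\<sigma> i) else 0)" if "i \<in> S" for i
  proof (intro sum.cong refl)
    fix j assume j: "j \<in> S"
    have "(i = \<sigma> j) = (j = \<sigma> i)" using assms(2,3) that j by metis
    thus "permk S \<sigma> i j * v j = (if j = \<sigma> i then v (\<sigma> i) else 0)" using j by (auto simp: permk_def)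
  qed
  thus ?thesis unfolding apply_op_def using assms by (auto intro!: ext)
qed

lemma ifz_mult: "(if P then c else 0) * y = (if P then c * y else (0::'a::mult_zero))" by simp

lemma sum_times: "finite A \<Longrightarrow> finite B \<Longrightarrow> sum f (A \<times> B) = (\<Sum>x\<in>A. \<Sum>y\<in>B. f (x,y))"
  by (simp add: sum.cartesian_product)

lemma sum_space: "(\<Sum>j\<in>space nx nz na. f j) = (\<Sum>x'<nx. \<Sum>z'<nz. \<Sum>a'<na. f (x',z',a',True) + f (x',z',a',False))"
proof -
  have U: "(UNIV::bool set) = {True, False}" by auto
  show ?thesis unfolding space_def
    by (simp add: sum_times U atLeast0LessThan)
qed

lemma apply_lift:
  assumes "x < nx" "z < nz" "a < na"
  shows "apply_op (space nx nz na) (lift K) v (x,z,a,b) = (\<Sum>x'<nx. \<Sum>z'<nz. K (x,z) (x',z') * v (x',z',a,b))"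
proof -
  have "(\<Sum>a'<na. (if a = a' \<and> b = True then K (x, z) (x', z') else 0) * v (x', z', a', True) +
             (if a = a' \<and> b = False then K (x, z) (x', z') else 0) * v (x', z', a', False)) = 
        K (x,z) (x',z') * v (x',z',a,b)" for x' z'
    using assms by (cases b) (simp_all add: ifz_mult)
  moreover have "(x,z,a,b) \<in> space nx nz na" using assms by (simp add: space_def)
  ultimately show ?thesis unfolding apply_op_def by (simp add: sum_space lift_def)
qed

lemma apply_S0:
  fixes nx nz :: nat
  assumes "x < nx" "z < nz"
  shows "apply_op ({0..<nx} \<times> {0..<nz}) K w (x,z) = (\<Sum>x'<nx. \<Sum>z'<nz. K (x,z) (x',z') * w (x',z'))"
  using assms unfolding apply_op_def by (subst sum_times) (auto simp: atLeast0LessThan)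

definition hw :: "nat \<Rightarrow> nat \<Rightarrow> real" where
  "hw M k = (if k = 0 then 1 else 0) - 1 / sqrt (real M)"

definition hh :: "nat \<Rightarrow> nat \<Rightarrow> nat \<Rightarrow> real" where
  "hh M i j = (if i = j then 1 else 0) - (2 / (\<Sum>k<M. (hw M k)\<^sup>2)) * hw M i * hw M j"

lemma hh_sym: "hh M i j = hh M j i"
  unfolding hh_def by auto

lemma hh_unit:
  assumes "i < M" "j < M"
  shows "(\<Sum>k<M. hh M k i * hh M k j) = (if i = j then 1 else 0)"
proof -
  define N where "N = (\<Sum>k<M. (hw M k)\<^sup>2)"
  define c where "c = 2 / N"
  have cN: "c * c * N = 2 * c" unfolding c_def by (cases "N = 0") (auto simp: field_simps power2_eq_square)
  have "(\<Sum>k<M. hh M k i * hh M k j) = (\<Sum>k<M. (if k = i then (if k = j then 1 else 0) else 0)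
     - (if k = i then c * hw M k * hw M j else 0) - (if k = j then c * hw M k * hw M i else 0)
     + c * c * hw M i * hw M j * (hw M k)\<^sup>2)"
    unfolding hh_def c_def N_def by (intro sum.cong) (auto simp: algebra_simps power2_eq_square)
  also have "\<dots> = (if i = j then 1 else 0) - c * hw M i * hw M j - c * hw M j * hw M i
     + c * c * hw M i * hw M j * N"
    using assms by (simp add: sum.distrib sum_subtractf sum_distrib_left[symmetric] N_def)
  also have "\<dots> = (if i = j then 1 else 0)"
  proof -
    have "c * c * N * (hw M i * hw M j) = 2 * c * (hw M i * hw M j)" using cN by simp
    hence "c * c * hw M i * hw M j * N = c * hw M i * hw M j + c * hw M j * hw M i"
      by (simp add: algebra_simps)
    thus ?thesis by simp
  qed
  finally show ?thesis .
qed

lemma hh_row0: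
  assumes "1 \<le> M" "k < M"
  shows "hh M 0 k = 1 / sqrt (real M)"
proof -
  define u where "u = 1 / sqrt (real M)"
  have uu: "real M * u\<^sup>2 = 1" unfolding u_def using assms by (simp add: power_divide)
  have N: "(\<Sum>k<M. (hw M k)\<^sup>2) = 2 - 2 * u"
  proof -
    have "(\<Sum>k<M. (hw M k)\<^sup>2) = (\<Sum>k<M. (if k = 0 then 1 - 2 * u else 0) + u\<^sup>2)"
      unfolding hw_def u_def[symmetric] by (intro sum.cong) (auto simp: power2_eq_square algebra_simps)
    also have "\<dots> = 1 - 2 * u + real M * u\<^sup>2" using assms by (simp add: sum.distrib)
    finally show ?thesis using uu by simp
  qed
  show ?thesis
  proof (cases "M = 1")
    case True
    thus ?thesis using assms unfolding hh_def hw_def by simp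
  next
    case False
    hence "u < 1" unfolding u_def using assms by (simp add: divide_less_eq)
    hence "2 / (2 - 2 * u) * hw M 0 = 1" unfolding hw_def u_def[symmetric] by (simp add: field_simps)
    hence "hh M 0 k = (if 0 = k then 1 else 0) - hw M k" unfolding hh_def N by (simp add: mult.commute mult.left_commute)
    thus ?thesis unfolding hw_def u_def by simp
  qed
qed

lemma sum_space_fiber:
  assumes "x < nx" "z < nz"
    and "\<And>x' z' a' b'. f (x',z',a',b') \<noteq> 0 \<Longrightarrow> x' = x \<and> z' = z \<and> b' = b"
  shows "(\<Sum>k\<in>space nx nz na. f k) = (\<Sum>a'<na. f (x,z,a',b))"
proof -
  have "(\<Sum>k\<in>space nx nz na. f k) = (\<Sum>x'<nx. if x' = x then (\<Sum>z'<nz. if z' = z then (\<Sum>a'<na. f (x,z,a',b)) else 0) else 0)"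
    unfolding sum_space
  proof (intro sum.cong refl)
    fix x' assume "x' \<in> {..<nx}"
    show "(\<Sum>z'<nz. \<Sum>a'<na. f (x', z', a', True) + f (x', z', a', False)) =
          (if x' = x then \<Sum>z'<nz. if z' = z then \<Sum>a'<na. f (x, z, a', b) else 0 else 0)"
    proof (cases "x' = x")
      case False
      hence "f (x', z', a', b') = 0" for z' a' b' using assms(3) by blast
      thus ?thesis using False by simp
    next
      case True
      have "(\<Sum>a'<na. f (x', z', a', True) + f (x', z', a', False)) = (if z' = z then \<Sum>a'<na. f (x, z, a', b) else 0)" for z'
      proof (cases "z' = z")
        case False
        hence "f (x', z', a', b') = 0" for a' b' using assms(3) by blast
        thus ?thesis using False by simp
      next
        case True2: True
        have "f (x', z', a', True) + f (x', z', a', False) = f (x,z,a',b)" for a'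
        proof -
          have "f (x', z', a', \<not> b) = 0" using assms(3)[of x' z' a' "\<not> b"] by blast
          thus ?thesis using True True2 by (cases b) auto
        qed
        thus ?thesis using True2 by simp
      qed
      thus ?thesis using True by simp
    qed
  qed
  thus ?thesis using assms by simp
qed

definition hk :: "nat \<Rightarrow> nat \<Rightarrow> nat \<Rightarrow> idx kernel" where
  "hk nx nz M = (\<lambda>(x,z,a,b) (x',z',a',b'). if x = x' \<and> z = z' \<and> b = b' \<and> x < nx \<and> z < nz \<and> a < M \<and> a' < M
      then complex_of_real (hh M a a') else 0)"

lemma apply_hk:
  assumes "x < nx" "z < nz" "a < M"
  shows "apply_op (space nx nz M) (hk nx nz M) v (x,z,a,b) = (\<Sum>a'<M. complex_of_real (hh M a a') * v (x,z,a',b))"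
proof -
  have m: "(x,z,a,b) \<in> space nx nz M" using assms by (simp add: space_def)
  have "(\<Sum>j\<in>space nx nz M. hk nx nz M (x,z,a,b) j * v j) = (\<Sum>a'<M. hk nx nz M (x,z,a,b) (x,z,a',b) * v (x,z,a',b))"
    using assms by (intro sum_space_fiber) (auto simp: hk_def split: if_splits)
  thus ?thesis unfolding apply_op_def using m assms by (simp add: hk_def)
qed

lemma unitary_hk:
  assumes "1 \<le> M"
  shows "unitary_on (space nx nz M) (hk nx nz M)"
  unfolding unitary_on_def
proof (intro conjI allI impI ballI)
  show "finite (space nx nz M)" unfolding space_def by simp
next
  fix i j assume "i \<notin> space nx nz M \<or> j \<notin> space nx nz M"
  thus "hk nx nz M i j = 0" by (cases i; cases j) (auto simp: hk_def space_def)
next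
  fix i j assume i: "i \<in> space nx nz M" and j: "j \<in> space nx nz M"
  obtain x z a b where ii: "i = (x,z,a,b)" by (cases i) auto
  obtain x' z' a' b' where jj: "j = (x',z',a',b')" by (cases j) auto
  have r: "x < nx" "z < nz" "a < M" "x' < nx" "z' < nz" "a' < M" using i j ii jj by (auto simp: space_def)
  have "(\<Sum>k\<in>space nx nz M. cnj (hk nx nz M k i) * hk nx nz M k j) =
        (\<Sum>a''<M. cnj (hk nx nz M (x,z,a'',b) i) * hk nx nz M (x,z,a'',b) j)"
    using r by (intro sum_space_fiber) (auto simp: hk_def ii split: if_splits)
  also have "\<dots> = (if (x,z,b) = (x',z',b') then (\<Sum>a''<M. complex_of_real (hh M a'' a * hh M a'' a')) else 0)"
    using r by (auto simp: hk_def ii jj intro!: sum.cong)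
  also have "\<dots> = (if i = j then 1 else 0)"
  proof -
    have "(\<Sum>a''<M. complex_of_real (hh M a'' a * hh M a'' a')) = complex_of_real (if a = a' then 1 else 0)"
      by (simp only: of_real_sum[symmetric] hh_unit[OF r(3) r(6)])
    thus ?thesis by (auto simp: ii jj)
  qed
  finally show "(\<Sum>k\<in>space nx nz M. cnj (hk nx nz M k i) * hk nx nz M k j) = (if i = j then 1 else 0)" .
qed

definition nbk :: "nat \<Rightarrow> nat \<Rightarrow> nat \<Rightarrow> (nat \<Rightarrow> bool) \<Rightarrow> nat \<Rightarrow> idx kernel" where
  "nbk nx nz na \<chi> j = diagk (space nx nz na) (\<lambda>(x,z,a,b). if j < a \<and> \<not> \<chi> z then -1 else 1)"

definition nzk :: "nat \<Rightarrow> nat \<Rightarrow> nat \<Rightarrow> nat \<Rightarrow> idx kernel" where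
  "nzk nx nz na j = diagk (space nx nz na) (\<lambda>(x,z,a,b). if j < a \<and> z = 0 then -1 else 1)"

definition fl :: "idx \<Rightarrow> idx" where
  "fl = (\<lambda>(x,z,a,b). (x,z,a, if a = 0 then \<not> b else b))"

definition flk :: "nat \<Rightarrow> nat \<Rightarrow> nat \<Rightarrow> idx kernel" where
  "flk nx nz na = permk (space nx nz na) fl"

lemma OOadj:
  assumes U: "unitary_on S0 K" and i: "i \<in> S0"
  shows "(\<Sum>k\<in>S0. K i k * (\<Sum>l\<in>S0. cnj (K l k) * g l)) = g i"
proof -
  have fin: "finite S0" using U unfolding unitary_on_def by auto
  have "(\<Sum>k\<in>S0. K i k * (\<Sum>l\<in>S0. cnj (K l k) * g l)) = (\<Sum>k\<in>S0. \<Sum>l\<in>S0. g l * (K i k * cnj (K l k)))"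
    by (simp add: sum_distrib_left algebra_simps)
  also have "\<dots> = (\<Sum>l\<in>S0. g l * (\<Sum>k\<in>S0. K i k * cnj (K l k)))"
    by (subst sum.swap) (simp add: sum_distrib_left)
  also have "\<dots> = (\<Sum>l\<in>S0. if l = i then g i else 0)"
    using unitary_right[OF U i] by (intro sum.cong) auto
  also have "\<dots> = g i" using fin i by simp
  finally show ?thesis .
qed

lemma sum_S0: "(\<Sum>k\<in>{0..<nx} \<times> {0..<(nz::nat)}. f k) = (\<Sum>x'<(nx::nat). \<Sum>z'<nz. f (x',z'))"
  by (simp add: sum_times atLeast0LessThan)

locale alg =
  fixes nx nz :: nat and \<chi> :: "nat \<Rightarrow> bool" and M :: nat and Or :: "(nat \<times> nat) kernel"
  assumes M1: "1 \<le> M" and U: "unitary_on ({0..<nx} \<times> {0..<nz}) Or" and nz0: "0 < nz"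
  and colf: "\<And>x' y z. x' < nx \<Longrightarrow> y < nx \<Longrightarrow> z < nz \<Longrightarrow> Or (y,z) (x',0) = (if y = x' then Or (x',z) (x',0) else 0)"
begin

abbreviation S where "S \<equiv> space nx nz M"
definition \<Psi> where "\<Psi> y z = Or (y,z) (y,0)"

lemma col_Psi: "x' < nx \<Longrightarrow> y < nx \<Longrightarrow> z < nz \<Longrightarrow> Or (y,z) (x',0) = (if y = x' then \<Psi> x' z else 0)"
  using colf unfolding \<Psi>_def by blast

lemma finS: "finite S" unfolding space_def by simp

lemma block:
  assumes r: "x' < nx" "z < nz" "a < M"
  shows "run S Or [QueryInv, Fixed (nzk nx nz M j), Query] v (x',z,a,b) =
    (if j < a then v (x',z,a,b) - 2 * \<Psi> x' z * (\<Sum>z1<nz. cnj (\<Psi> x' z1) * v (x',z1,a,b)) else v (x',z,a,b))"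
proof -
  define g where "g = (\<lambda>(y,w). v (y,w,a,b))"
  define T where "T k = (\<Sum>l\<in>{0..<nx} \<times> {0..<nz}. cnj (Or l k) * g l)" for k
  define v1 where "v1 = apply_op S (lift (adj Or)) v"
  define v2 where "v2 = apply_op S (nzk nx nz M j) v1"
  have v1: "v1 (x'',z'',a,b) = T (x'',z'')" if "x'' < nx" "z'' < nz" for x'' z''
    unfolding v1_def T_def using that r by (simp add: apply_lift sum_S0 adj_def g_def)
  have v2: "v2 (x'',z'',a,b) = (if j < a \<and> z'' = 0 then -1 else 1) * T (x'',z'')" if "x'' < nx" "z'' < nz" for x'' z''
    unfolding v2_def nzk_def using that r v1 finS by (simp add: apply_diag space_def)
  have "run S Or [QueryInv, Fixed (nzk nx nz M j), Query] v (x',z,a,b) = apply_op S (lift Or) v2 (x',z,a,b)"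
    by (simp add: v1_def v2_def)
  also have "\<dots> = (\<Sum>x''<nx. \<Sum>z''<nz. Or (x',z) (x'',z'') * ((if j < a \<and> z'' = 0 then -1 else 1) * T (x'',z'')))"
    using r by (simp add: apply_lift v2)
  also have "\<dots> = (\<Sum>k\<in>{0..<nx} \<times> {0..<nz}. Or (x',z) k * T k) - (if j < a then 2 * (\<Sum>x''<nx. Or (x',z) (x'',0) * T (x'',0)) else 0)"
  proof (cases "j < a")
    case True
    have "(\<Sum>x''<nx. \<Sum>z''<nz. Or (x',z) (x'',z'') * ((if j < a \<and> z'' = 0 then -1 else 1) * T (x'',z''))) =
      (\<Sum>x''<nx. \<Sum>z''<nz. Or (x',z) (x'',z'') * T (x'',z'') - (if z'' = 0 then 2 * (Or (x',z) (x'',0) * T (x'',0)) else 0))"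
      using True by (intro sum.cong) auto
    also have "\<dots> = (\<Sum>x''<nx. \<Sum>z''<nz. Or (x',z) (x'',z'') * T (x'',z'')) - 2 * (\<Sum>x''<nx. Or (x',z) (x'',0) * T (x'',0))"
      using nz0 by (simp add: sum_subtractf sum_distrib_left)
    finally show ?thesis using True by (simp add: sum_S0)
  next
    case False
    thus ?thesis by (simp add: sum_S0)
  qed
  also have "(\<Sum>k\<in>{0..<nx} \<times> {0..<nz}. Or (x',z) k * T k) = g (x',z)"
    unfolding T_def using r by (intro OOadj[OF U]) auto
  also have "(\<Sum>x''<nx. Or (x',z) (x'',0) * T (x'',0)) = \<Psi> x' z * T (x',0)"
  proof -
    have "(\<Sum>x''<nx. Or (x',z) (x'',0) * T (x'',0)) = (\<Sum>x''<nx. if x'' = x' then \<Psi> x' z * T (x',0) else 0)"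
      using r nz0 by (intro sum.cong) (auto simp: col_Psi)
    thus ?thesis using r by simp
  qed
  also have "T (x',0) = (\<Sum>z1<nz. cnj (\<Psi> x' z1) * v (x',z1,a,b))"
  proof -
    have "T (x',0) = (\<Sum>y<nx. \<Sum>w<nz. if y = x' then cnj (\<Psi> x' w) * v (x',w,a,b) else 0)"
      unfolding T_def sum_S0 using r nz0 by (intro sum.cong) (auto simp: col_Psi g_def)
    also have "\<dots> = (\<Sum>y<nx. if y = x' then (\<Sum>w<nz. cnj (\<Psi> x' w) * v (x',w,a,b)) else 0)"
      by (intro sum.cong) auto
    finally show ?thesis using r by simp
  qed
  finally show ?thesis by (simp add: g_def)
qed

end

fun pq :: "real \<Rightarrow> real \<Rightarrow> nat \<Rightarrow> real \<times> real" where
  "pq s1 s0 0 = (1, 1)"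
| "pq s1 s0 (Suc n) = (let p = fst (pq s1 s0 n); q = snd (pq s1 s0 n); m = p * s1 - q * s0 in (p - 2 * m, - q - 2 * m))"

lemma pq_closed:
  "sin th * fst (pq ((sin th)\<^sup>2) ((cos th)\<^sup>2) n) = sin ((2 * real n + 1) * th) \<and>
   cos th * snd (pq ((sin th)\<^sup>2) ((cos th)\<^sup>2) n) = cos ((2 * real n + 1) * th)"
proof (induction n)
  case 0 thus ?case by simp
next
  case (Suc n)
  define p where "p = fst (pq ((sin th)\<^sup>2) ((cos th)\<^sup>2) n)"
  define q where "q = snd (pq ((sin th)\<^sup>2) ((cos th)\<^sup>2) n)"
  define a where "a = (2 * real n + 1) * th"
  have P: "sin th * p = sin a" and Q: "cos th * q = cos a" using Suc unfolding p_def q_def a_def by auto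
  have e: "(2 * real (Suc n) + 1) * th = a + 2 * th" unfolding a_def by (simp add: algebra_simps)
  have s2: "sin (a + 2 * th) = sin a * (1 - 2 * (sin th)\<^sup>2) + cos a * (2 * sin th * cos th)"
    by (simp add: sin_add sin_double cos_double_sin)
  have c2: "cos (a + 2 * th) = cos a * (1 - 2 * (sin th)\<^sup>2) - sin a * (2 * sin th * cos th)"
    by (simp add: cos_add sin_double cos_double_sin)
  have sc: "(sin th)\<^sup>2 + (cos th)\<^sup>2 = 1" by simp
  have "sin th * (p - 2 * (p * (sin th)\<^sup>2 - q * (cos th)\<^sup>2)) = sin (a + 2 * th)"
    unfolding s2 P[symmetric] Q[symmetric] by (simp add: algebra_simps power2_eq_square)
  moreover have "cos th * (- q - 2 * (p * (sin th)\<^sup>2 - q * (cos th)\<^sup>2)) = cos (a + 2 * th)"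
  proof -
    have "cos th * (- q - 2 * (p * (sin th)\<^sup>2 - q * (cos th)\<^sup>2)) = cos th * q * (2 * (cos th)\<^sup>2 - 1) - sin th * p * (2 * sin th * cos th)"
      by (simp add: algebra_simps power2_eq_square)
    also have "\<dots> = cos a * (1 - 2 * (sin th)\<^sup>2) - sin a * (2 * sin th * cos th)"
      using P Q by (simp add: algebra_simps cos_squared_eq)
    finally show ?thesis using c2 by simp
  qed
  ultimately show ?case unfolding e by (simp add: p_def q_def Let_def)
qed

lemma sin_sq_diff: "sin (x + y::real) * sin (x - y) = (sin x)\<^sup>2 - (sin y)\<^sup>2"
proof -
  have "sin (x + y) * sin (x - y) = (sin x)\<^sup>2 * (cos y)\<^sup>2 - (cos x)\<^sup>2 * (sin y)\<^sup>2"
    unfolding sin_add sin_diff by (simp add: power2_eq_square algebra_simps)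
  also have "\<dots> = (sin x)\<^sup>2 - (sin y)\<^sup>2" by (simp add: cos_squared_eq algebra_simps)
  finally show ?thesis .
qed

lemma sc_diff: "cos (x + y::real) * sin (x - y) = sin x * cos x - sin y * cos y"
proof -
  have "cos (x + y) * sin (x - y) = sin x * cos x * ((sin y)\<^sup>2 + (cos y)\<^sup>2) - sin y * cos y * ((sin x)\<^sup>2 + (cos x)\<^sup>2)"
    unfolding cos_add sin_diff power2_eq_square by algebra
  thus ?thesis by simp
qed

lemma sum_sin_odd: "sin th * (\<Sum>k<M. sin ((2 * real k + 1) * th)) = (sin (real M * th))\<^sup>2"
proof (induction M)
  case 0 thus ?case by simp
next
  case (Suc M)
  have "(sin (real (Suc M) * th))\<^sup>2 - (sin (real M * th))\<^sup>2 = sin th * sin ((2 * real M + 1) * th)"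
    using sin_sq_diff[of "real (Suc M) * th" "real M * th"] by (simp add: algebra_simps)
  thus ?case using Suc by (simp add: algebra_simps)
qed

lemma sum_cos_odd: "sin th * (\<Sum>k<M. cos ((2 * real k + 1) * th)) = sin (real M * th) * cos (real M * th)"
proof (induction M)
  case 0 thus ?case by simp
next
  case (Suc M)
  have "sin (real (Suc M) * th) * cos (real (Suc M) * th) - sin (real M * th) * cos (real M * th) = sin th * cos ((2 * real M + 1) * th)"
    using sc_diff[of "real (Suc M) * th" "real M * th"] by (simp add: algebra_simps)
  thus ?case using Suc by (simp add: algebra_simps)
qed

lemma final_trig:
  assumes s: "0 < sin th" and M: "1 \<le> M"
  shows "((1 / real M) * (\<Sum>k<M. fst (pq ((sin th)\<^sup>2) ((cos th)\<^sup>2) k)))\<^sup>2 * (sin th)\<^sup>2 +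
         ((1 / real M) * (\<Sum>k<M. snd (pq ((sin th)\<^sup>2) ((cos th)\<^sup>2) k)))\<^sup>2 * (cos th)\<^sup>2 =
         (sin (real M * th))\<^sup>2 / ((real M)\<^sup>2 * (sin th)\<^sup>2)"
proof -
  define SP where "SP = (\<Sum>k<M. sin ((2 * real k + 1) * th))"
  define SQ where "SQ = (\<Sum>k<M. cos ((2 * real k + 1) * th))"
  have p: "sin th * (\<Sum>k<M. fst (pq ((sin th)\<^sup>2) ((cos th)\<^sup>2) k)) = SP"
    unfolding SP_def sum_distrib_left using pq_closed by simp
  have q: "cos th * (\<Sum>k<M. snd (pq ((sin th)\<^sup>2) ((cos th)\<^sup>2) k)) = SQ"
    unfolding SQ_def sum_distrib_left using pq_closed by simp
  have "((1 / real M) * (\<Sum>k<M. fst (pq ((sin th)\<^sup>2) ((cos th)\<^sup>2) k)))\<^sup>2 * (sin th)\<^sup>2 +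
         ((1 / real M) * (\<Sum>k<M. snd (pq ((sin th)\<^sup>2) ((cos th)\<^sup>2) k)))\<^sup>2 * (cos th)\<^sup>2 =
        ((sin th * (\<Sum>k<M. fst (pq ((sin th)\<^sup>2) ((cos th)\<^sup>2) k)))\<^sup>2 +
         (cos th * (\<Sum>k<M. snd (pq ((sin th)\<^sup>2) ((cos th)\<^sup>2) k)))\<^sup>2) / (real M)\<^sup>2"
    by (simp add: power_mult_distrib power_divide add_divide_distrib mult.commute)
  also have "\<dots> = (SP\<^sup>2 + SQ\<^sup>2) / (real M)\<^sup>2" unfolding p q ..
  also have "SP\<^sup>2 + SQ\<^sup>2 = (sin (real M * th))\<^sup>2 / (sin th)\<^sup>2"
  proof -
    have a: "sin th * SP = (sin (real M * th))\<^sup>2" unfolding SP_def by (rule sum_sin_odd)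
    have b: "sin th * SQ = sin (real M * th) * cos (real M * th)" unfolding SQ_def by (rule sum_cos_odd)
    have "(sin th)\<^sup>2 * (SP\<^sup>2 + SQ\<^sup>2) = (sin th * SP)\<^sup>2 + (sin th * SQ)\<^sup>2" by (simp add: power_mult_distrib algebra_simps)
    also have "\<dots> = (sin (real M * th))\<^sup>2"
      unfolding a b power_mult_distrib cos_squared_eq by (simp add: algebra_simps power2_eq_square)
    finally show ?thesis using s by (simp add: field_simps)
  qed
  finally show ?thesis by (simp add: field_simps)
qed

lemma run_append: "run S Or (xs @ ys) v = run S Or ys (run S Or xs v)"
  by (induction xs arbitrary: v) auto

lemma apply_out: "i \<notin> S \<Longrightarrow> apply_op S K v i = 0"
  unfolding apply_op_def by simp

definition itg :: "nat \<Rightarrow> nat \<Rightarrow> nat \<Rightarrow> (nat \<Rightarrow> bool) \<Rightarrow> nat \<Rightarrow> gate list" where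
  "itg nx nz M \<chi> n = concat (map (\<lambda>j. [Fixed (nbk nx nz M \<chi> j), QueryInv, Fixed (nzk nx nz M j), Query]) [0..<n])"

lemma itg_Suc: "itg nx nz M \<chi> (Suc n) = itg nx nz M \<chi> n @ [Fixed (nbk nx nz M \<chi> n), QueryInv, Fixed (nzk nx nz M n), Query]"
  unfolding itg_def by simp

lemma sum_if_P [simp]: "(\<Sum>i\<in>A. if P then f i else 0) = (if P then sum f A else 0)"
  by (cases P) auto

context alg begin

definition st :: "nat \<Rightarrow> (nat \<Rightarrow> bool \<Rightarrow> complex) \<Rightarrow> idx \<Rightarrow> complex" where
  "st x F = (\<lambda>(x',z,a,b). if x' = x \<and> z < nz \<and> a < M \<and> \<not> b then F a (\<chi> z) * \<Psi> x z else 0)"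

lemma st_out: "x < nx \<Longrightarrow> i \<notin> S \<Longrightarrow> st x F i = 0"
  by (cases i) (auto simp: st_def space_def)

lemma eq_on_S:
  assumes "\<And>x' z a b. x' < nx \<Longrightarrow> z < nz \<Longrightarrow> a < M \<Longrightarrow> f (x',z,a,b) = g (x',z,a,b)"
    and "\<And>i. i \<notin> S \<Longrightarrow> f i = 0" and "\<And>i. i \<notin> S \<Longrightarrow> g i = 0"
  shows "f = g"
proof
  fix i show "f i = g i"
  proof (cases "i \<in> S")
    case True
    then obtain x' z a b where "i = (x',z,a,b)" "x' < nx" "z < nz" "a < M" by (cases i) (auto simp: space_def)
    thus ?thesis using assms(1) by simp
  next
    case False thus ?thesis using assms(2,3) by simp
  qed
qed

lemma query0:
  assumes x: "x < nx"
  shows "apply_op S (lift Or) (ket (x,0,0,False)) = st x (\<lambda>a t. if a = 0 then 1 else 0)"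
proof (rule eq_on_S)
  fix x' z a b assume r: "x' < nx" "z < nz" "a < M"
  have "apply_op S (lift Or) (ket (x,0,0,False)) (x',z,a,b) =
     (\<Sum>x''<nx. \<Sum>z''<nz. if x'' = x then (if z'' = 0 then (if a = 0 \<and> \<not> b then Or (x',z) (x,0) else 0) else 0) else 0)"
    unfolding apply_lift[OF r] by (intro sum.cong refl) (auto simp: ket_def)
  also have "\<dots> = (if a = 0 \<and> \<not> b then Or (x',z) (x,0) else 0)"
    using x nz0 by simp
  also have "\<dots> = st x (\<lambda>a t. if a = 0 then 1 else 0) (x',z,a,b)"
    using r x by (simp add: col_Psi st_def)
  finally show "apply_op S (lift Or) (ket (x,0,0,False)) (x',z,a,b) = st x (\<lambda>a t. if a = 0 then 1 else 0) (x',z,a,b)" .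
qed (auto simp: apply_out st_out x)

lemma hk_st:
  assumes x: "x < nx"
  shows "apply_op S (hk nx nz M) (st x F) = st x (\<lambda>a t. \<Sum>a'<M. complex_of_real (hh M a a') * F a' t)"
proof (rule eq_on_S)
  fix x' z a b assume r: "x' < nx" "z < nz" "a < M"
  have "apply_op S (hk nx nz M) (st x F) (x',z,a,b) = (\<Sum>a'<M. complex_of_real (hh M a a') * st x F (x',z,a',b))"
    using r by (simp add: apply_hk)
  also have "\<dots> = (\<Sum>a'<M. if x' = x \<and> \<not> b then complex_of_real (hh M a a') * F a' (\<chi> z) * \<Psi> x z else 0)"
    using r by (intro sum.cong) (auto simp: st_def)
  also have "\<dots> = st x (\<lambda>a t. \<Sum>a'<M. complex_of_real (hh M a a') * F a' t) (x',z,a,b)"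
    using r by (simp add: st_def sum_distrib_right)
  finally show "apply_op S (hk nx nz M) (st x F) (x',z,a,b) = st x (\<lambda>a t. \<Sum>a'<M. complex_of_real (hh M a a') * F a' t) (x',z,a,b)" .
qed (auto simp: apply_out st_out x)

lemma nb_st:
  assumes x: "x < nx"
  shows "apply_op S (nbk nx nz M \<chi> j) (st x F) = st x (\<lambda>a t. if j < a \<and> \<not> t then - F a t else F a t)"
proof (rule eq_on_S)
  fix x' z a b assume r: "x' < nx" "z < nz" "a < M"
  show "apply_op S (nbk nx nz M \<chi> j) (st x F) (x',z,a,b) = st x (\<lambda>a t. if j < a \<and> \<not> t then - F a t else F a t) (x',z,a,b)"
    using r finS by (simp add: nbk_def apply_diag space_def st_def)
qed (auto simp: apply_out st_out x)

definition sw :: "nat \<Rightarrow> bool \<Rightarrow> complex" where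
  "sw x t = (\<Sum>z<nz. if \<chi> z = t then cnj (\<Psi> x z) * \<Psi> x z else 0)"

lemma block_st:
  assumes x: "x < nx"
  shows "run S Or [QueryInv, Fixed (nzk nx nz M j), Query] (st x F) =
     st x (\<lambda>a t. if j < a then F a t - 2 * (F a True * sw x True + F a False * sw x False) else F a t)"
proof (rule eq_on_S)
  fix x' z a b assume r: "x' < nx" "z < nz" "a < M"
  have inner: "(\<Sum>z1<nz. cnj (\<Psi> x' z1) * st x F (x',z1,a,b)) =
     (if x' = x \<and> \<not> b then F a True * sw x True + F a False * sw x False else 0)"
  proof -
    have "(\<Sum>z1<nz. cnj (\<Psi> x' z1) * st x F (x',z1,a,b)) =
       (\<Sum>z1<nz. (if x' = x \<and> \<not> b then F a True * (if \<chi> z1 = True then cnj (\<Psi> x z1) * \<Psi> x z1 else 0)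
         + F a False * (if \<chi> z1 = False then cnj (\<Psi> x z1) * \<Psi> x z1 else 0) else 0))"
      using r by (intro sum.cong) (auto simp: st_def)
    thus ?thesis by (simp add: sw_def sum.distrib sum_distrib_left)
  qed
  show "run S Or [QueryInv, Fixed (nzk nx nz M j), Query] (st x F) (x',z,a,b) =
     st x (\<lambda>a t. if j < a then F a t - 2 * (F a True * sw x True + F a False * sw x False) else F a t) (x',z,a,b)"
    unfolding block[OF r] inner using r by (auto simp: st_def algebra_simps)
next
  fix i :: idx assume "i \<notin> S"
  thus "run S Or [QueryInv, Fixed (nzk nx nz M j), Query] (st x F) i = 0" by (simp add: apply_out)
qed (auto simp: st_out x)

end

context alg begin

definition s1r where "s1r x = (\<Sum>z<nz. if \<chi> z then (cmod (\<Psi> x z))\<^sup>2 else 0)"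
definition s0r where "s0r x = (\<Sum>z<nz. if \<not> \<chi> z then (cmod (\<Psi> x z))\<^sup>2 else 0)"

lemma sw_real: "sw x True = complex_of_real (s1r x)" "sw x False = complex_of_real (s0r x)"
  unfolding sw_def s1r_def s0r_def of_real_sum
  by (auto intro!: sum.cong simp: mult.commute[of "cnj _"] mult_cnj_cmod)

definition c0 where "c0 = 1 / sqrt (real M)"

definition Fk where "Fk x n a t = complex_of_real (c0 * (if t then fst (pq (s1r x) (s0r x) (min a n)) else snd (pq (s1r x) (s0r x) (min a n))))"

lemma st_cong: "(\<And>a t. a < M \<Longrightarrow> F a t = G a t) \<Longrightarrow> st x F = st x G"
  unfolding st_def by (intro ext) auto

lemma iter:
  assumes x: "x < nx"
  shows "run S Or (itg nx nz M \<chi> n) (st x (Fk x 0)) = st x (Fk x n)"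
proof (induction n)
  case 0 thus ?case by (simp add: itg_def)
next
  case (Suc n)
  have "run S Or (itg nx nz M \<chi> (Suc n)) (st x (Fk x 0)) =
     run S Or [QueryInv, Fixed (nzk nx nz M n), Query] (apply_op S (nbk nx nz M \<chi> n) (st x (Fk x n)))"
    by (simp add: itg_Suc run_append Suc)
  also have "\<dots> = st x (Fk x (Suc n))"
    unfolding nb_st[OF x] block_st[OF x] sw_real
  proof (rule st_cong)
    fix a t assume "a < M"
    show "(if n < a then (if n < a \<and> \<not> t then - Fk x n a t else Fk x n a t) -
             2 * ((if n < a \<and> \<not> True then - Fk x n a True else Fk x n a True) * complex_of_real (s1r x) +
                  (if n < a \<and> \<not> False then - Fk x n a False else Fk x n a False) * complex_of_real (s0r x))
        else (if n < a \<and> \<not> t then - Fk x n a t else Fk x n a t)) = Fk x (Suc n) a t"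
    proof (cases "n < a")
      case True
      hence m: "min a n = n" "min a (Suc n) = Suc n" by auto
      show ?thesis using True unfolding Fk_def m by (cases t) (simp_all add: Let_def algebra_simps)
    next
      case False
      hence m: "min a (Suc n) = min a n" by auto
      show ?thesis using False unfolding Fk_def m by simp
    qed
  qed
  finally show ?case .
qed

definition fin where "fin x F = (\<lambda>(x',z,a,b). if x' = x \<and> z < nz \<and> a < M \<and> b = (a = 0) then F a (\<chi> z) * \<Psi> x z else 0)"

lemma flag_st:
  assumes x: "x < nx"
  shows "apply_op S (flk nx nz M) (st x F) = fin x F"
proof -
  have a1: "\<And>i. i \<in> S \<Longrightarrow> fl i \<in> S" by (auto simp: fl_def space_def)
  have a2: "fl (fl i) = i" if "i \<in> S" for i
  proof -
    obtain x' z a b where i: "i = (x',z,a,b)" by (cases i) auto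
    show "fl (fl i) = i" unfolding i by (cases "a = 0") (simp_all add: fl_def)
  qed
  have "(if i \<in> S then st x F (fl i) else 0) = fin x F i" for i
  proof -
    obtain x' z a b where i: "i = (x',z,a,b)" by (cases i) auto
    show ?thesis
      unfolding i by (cases "a = 0"; cases b) (auto simp: fl_def st_def fin_def space_def x)
  qed
  moreover have "apply_op S (flk nx nz M) (st x F) = (\<lambda>i. if i \<in> S then st x F (fl i) else 0)"
    unfolding flk_def by (rule apply_perm[OF finS a1 a2])
  ultimately show ?thesis by auto
qed

definition Ffin where "Ffin x = (\<lambda>a t. \<Sum>a'<M. complex_of_real (hh M a a') * Fk x (M - 1) a' t)"

definition gs where "gs = [Query, Fixed (hk nx nz M)] @ itg nx nz M \<chi> (M - 1) @ [Fixed (hk nx nz M), Fixed (flk nx nz M)]"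

lemma run_gs:
  assumes x: "x < nx"
  shows "run S Or gs (ket (x,0,0,False)) = fin x (Ffin x)"
proof -
  have "run S Or [Query, Fixed (hk nx nz M)] (ket (x,0,0,False)) = st x (Fk x 0)"
  proof -
    have "run S Or [Query, Fixed (hk nx nz M)] (ket (x,0,0,False)) =
       st x (\<lambda>a t. \<Sum>a'<M. complex_of_real (hh M a a') * (if a' = 0 then 1 else 0))"
      by (simp add: query0[OF x] hk_st[OF x])
    also have "\<dots> = st x (Fk x 0)"
    proof (rule st_cong)
      fix a t assume a: "a < M"
      have "(\<Sum>a'<M. complex_of_real (hh M a a') * (if a' = 0 then 1 else 0)) = complex_of_real (hh M a 0)"
        using M1 by (simp add: if_distrib[of "\<lambda>y. complex_of_real (hh M a _) * y"] cong: if_cong)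
      also have "\<dots> = complex_of_real c0" using hh_row0[OF M1 a] hh_sym[of M a 0] by (simp add: c0_def)
      finally show "(\<Sum>a'<M. complex_of_real (hh M a a') * (if a' = 0 then 1 else 0)) = Fk x 0 a t"
        by (simp add: Fk_def)
    qed
    finally show ?thesis .
  qed
  thus ?thesis unfolding gs_def
    by (simp add: run_append iter[OF x] hk_st[OF x] flag_st[OF x] Ffin_def)
qed

end

lemma decomp:
  fixes G :: "'a \<Rightarrow> complex"
  assumes fin: "finite T" and t0: "t0 \<in> T" and out: "\<And>p. p \<notin> T \<Longrightarrow> G p = 0"
  shows "\<exists>\<alpha> u. (\<Sum>p\<in>T. (cmod (u p))\<^sup>2) = 1 \<and> (\<forall>p. G p = \<alpha> * u p) \<and> (cmod \<alpha>)\<^sup>2 = (\<Sum>p\<in>T. (cmod (G p))\<^sup>2)"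
proof (cases "(\<Sum>p\<in>T. (cmod (G p))\<^sup>2) = 0")
  case True
  hence "\<forall>p\<in>T. (cmod (G p))\<^sup>2 = 0" using fin by (simp add: sum_nonneg_eq_0_iff)
  hence G0: "G p = 0" for p using out by (cases "p \<in> T") auto
  show ?thesis
    by (rule exI[of _ 0], rule exI[of _ "\<lambda>p. if p = t0 then 1 else 0"]) (simp add: G0 True fin t0 if_distrib[of "\<lambda>y. (cmod y)\<^sup>2"] cong: if_cong)
next
  case False
  define n2 where "n2 = (\<Sum>p\<in>T. (cmod (G p))\<^sup>2)"
  have n2p: "n2 > 0" using False fin unfolding n2_def by (simp add: sum_nonneg less_le)
  define \<alpha> where "\<alpha> = complex_of_real (sqrt n2)"
  have an: "cmod \<alpha> = sqrt n2" using n2p unfolding \<alpha>_def by simp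
  have a0: "\<alpha> \<noteq> 0" using n2p unfolding \<alpha>_def by simp
  show ?thesis
  proof (intro exI conjI allI)
    show "(\<Sum>p\<in>T. (cmod (G p / \<alpha>))\<^sup>2) = 1"
      using n2p an by (simp add: norm_divide power_divide sum_divide_distrib[symmetric] n2_def[symmetric])
    show "G p = \<alpha> * (G p / \<alpha>)" for p using a0 by simp
    show "(cmod \<alpha>)\<^sup>2 = (\<Sum>p\<in>T. (cmod (G p))\<^sup>2)" using an n2p n2_def by simp
  qed
qed

context alg begin

lemma Ffin0:
  "Ffin x 0 t = complex_of_real ((1 / real M) * (\<Sum>k<M. if t then fst (pq (s1r x) (s0r x) k) else snd (pq (s1r x) (s0r x) k)))"
proof -
  have cc: "c0 * c0 = 1 / real M" unfolding c0_def using M1 by (simp add: real_sqrt_mult[symmetric])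
  have "Ffin x 0 t = (\<Sum>a'<M. complex_of_real (c0 * c0 * (if t then fst (pq (s1r x) (s0r x) a') else snd (pq (s1r x) (s0r x) a'))))"
    unfolding Ffin_def Fk_def
  proof (intro sum.cong refl)
    fix a' assume "a' \<in> {..<M}"
    hence "a' < M" by simp
    hence "min a' (M - 1) = a'" "hh M 0 a' = c0" using hh_row0[OF M1] unfolding c0_def by auto
    thus "complex_of_real (hh M 0 a') * complex_of_real (c0 * (if t then fst (pq (s1r x) (s0r x) (min a' (M - 1))) else snd (pq (s1r x) (s0r x) (min a' (M - 1))))) =
          complex_of_real (c0 * c0 * (if t then fst (pq (s1r x) (s0r x) a') else snd (pq (s1r x) (s0r x) a')))"
      by (simp add: mult.assoc)
  qed
  also have "\<dots> = complex_of_real ((1 / real M) * (\<Sum>k<M. if t then fst (pq (s1r x) (s0r x) k) else snd (pq (s1r x) (s0r x) k)))"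
    unfolding cc of_real_sum[symmetric] sum_distrib_left by simp
  finally show ?thesis .
qed

lemma norm_GT:
  "(\<Sum>p\<in>{0..<nz} \<times> {0..<M}. (cmod (fin x (Ffin x) (x, fst p, snd p, True)))\<^sup>2) =
    ((1 / real M) * (\<Sum>k<M. fst (pq (s1r x) (s0r x) k)))\<^sup>2 * s1r x + ((1 / real M) * (\<Sum>k<M. snd (pq (s1r x) (s0r x) k)))\<^sup>2 * s0r x"
proof -
  define A where "A = (1 / real M) * (\<Sum>k<M. fst (pq (s1r x) (s0r x) k))"
  define B where "B = (1 / real M) * (\<Sum>k<M. snd (pq (s1r x) (s0r x) k))"
  have "(\<Sum>p\<in>{0..<nz} \<times> {0..<M}. (cmod (fin x (Ffin x) (x, fst p, snd p, True)))\<^sup>2) =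
     (\<Sum>z<nz. \<Sum>a<M. (cmod (fin x (Ffin x) (x, z, a, True)))\<^sup>2)"
    by (simp add: sum_times atLeast0LessThan)
  also have "\<dots> = (\<Sum>z<nz. (cmod (Ffin x 0 (\<chi> z) * \<Psi> x z))\<^sup>2)"
  proof (intro sum.cong refl)
    fix z assume "z \<in> {..<nz}"
    hence "(\<Sum>a<M. (cmod (fin x (Ffin x) (x, z, a, True)))\<^sup>2) = (\<Sum>a<M. if a = 0 then (cmod (Ffin x 0 (\<chi> z) * \<Psi> x z))\<^sup>2 else 0)"
      by (intro sum.cong) (auto simp: fin_def)
    thus "(\<Sum>a<M. (cmod (fin x (Ffin x) (x, z, a, True)))\<^sup>2) = (cmod (Ffin x 0 (\<chi> z) * \<Psi> x z))\<^sup>2"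
      using M1 by simp
  qed
  also have "\<dots> = (\<Sum>z<nz. (if \<chi> z then A\<^sup>2 * (cmod (\<Psi> x z))\<^sup>2 else 0) + (if \<not> \<chi> z then B\<^sup>2 * (cmod (\<Psi> x z))\<^sup>2 else 0))"
  proof (intro sum.cong refl)
    fix z
    have nF: "(cmod (Ffin x 0 t))\<^sup>2 = (if t then A\<^sup>2 else B\<^sup>2)" for t
      unfolding Ffin0 norm_of_real power2_abs A_def B_def by simp
    show "(cmod (Ffin x 0 (\<chi> z) * \<Psi> x z))\<^sup>2 = (if \<chi> z then A\<^sup>2 * (cmod (\<Psi> x z))\<^sup>2 else 0) + (if \<not> \<chi> z then B\<^sup>2 * (cmod (\<Psi> x z))\<^sup>2 else 0)"
      unfolding norm_mult power_mult_distrib nF by simp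
  qed
  also have "\<dots> = A\<^sup>2 * s1r x + B\<^sup>2 * s0r x"
    by (simp add: sum.distrib s1r_def s0r_def sum_distrib_left if_distrib[of "\<lambda>y. _ * y"] cong: if_cong)
  finally show ?thesis unfolding A_def B_def .
qed

end

lemma apply_ket0:
  fixes nx nz :: nat
  assumes "x' < nx" "0 < nz" "y < nx" "z < nz"
  shows "apply_op ({0..<nx} \<times> {0..<nz}) K (ket (x',0)) (y,z) = K (y,z) (x',0)"
proof -
  have "(\<Sum>j\<in>{0..<nx} \<times> {0..<nz}. K (y,z) j * ket (x',0) j) = (\<Sum>j\<in>{0..<nx} \<times> {0..<nz}. if j = (x',0) then K (y,z) (x',0) else 0)"
    by (intro sum.cong) (auto simp: ket_def)
  thus ?thesis using assms unfolding apply_op_def by simp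
qed

lemma itg_mem: "g \<in> set (itg nx nz M \<chi> n) \<Longrightarrow> g = Query \<or> g = QueryInv \<or> (\<exists>j. g = Fixed (nbk nx nz M \<chi> j)) \<or> (\<exists>j. g = Fixed (nzk nx nz M j))"
  unfolding itg_def by auto

lemma itg_queries: "length (filter is_query (itg nx nz M \<chi> n)) = 2 * n"
  by (induction n) (simp add: itg_def, simp add: itg_Suc)

lemma unitary_nbk: "unitary_on (space nx nz na) (nbk nx nz na \<chi> j)"
  unfolding nbk_def by (rule unitary_diag) (auto simp: space_def)

lemma unitary_nzk: "unitary_on (space nx nz na) (nzk nx nz na j)"
  unfolding nzk_def by (rule unitary_diag) (auto simp: space_def)

lemma unitary_flk: "unitary_on (space nx nz na) (flk nx nz na)"
proof -
  have a2: "fl (fl i) = i" for i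
  proof -
    obtain x' z a b where i: "i = (x',z,a,b)" by (cases i) auto
    show "fl (fl i) = i" unfolding i by (cases "a = 0") (simp_all add: fl_def)
  qed
  have a1: "fl i \<in> space nx nz na" if "i \<in> space nx nz na" for i
  proof -
    obtain x' z a b where i: "i = (x',z,a,b)" by (cases i) auto
    show ?thesis using that unfolding i by (simp add: fl_def space_def)
  qed
  show ?thesis unfolding flk_def by (rule unitary_perm[OF _ a1 a2]) (simp_all add: space_def)
qed

lemma main_lemma:
  fixes nx nz :: nat and \<chi> :: "nat \<Rightarrow> bool" and M :: nat
  assumes M: "1 \<le> M"
  shows "\<exists>na gs. na \<ge> 1 \<and> (\<forall>g\<in>set gs. gate_ok (space nx nz na) g) \<and> real (num_queries gs) \<le> 2 * real M \<and>
       (\<forall>(Or::(nat \<times> nat) kernel) (\<theta>::nat \<Rightarrow> real).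
          unitary_on ({0..<nx} \<times> {0..<nz}) Or \<and>
          (\<forall>x<nx. 0 < \<theta> x \<and> \<theta> x \<le> pi / 2 \<and>
             (\<exists>\<Psi>::nat \<Rightarrow> complex.
                apply_op ({0..<nx} \<times> {0..<nz}) Or (ket (x, 0)) =
                  (\<lambda>(x', z). if x' = x then \<Psi> z else 0) \<and>
                sin (\<theta> x) ^ 2 = (\<Sum>z\<in>{z. z < nz \<and> \<chi> z}. (cmod (\<Psi> z))\<^sup>2)))
          \<longrightarrow>
          (\<forall>x<nx. \<exists>(\<alpha>::complex) (\<beta>::complex) (u::nat \<times> nat \<Rightarrow> complex) (u'::nat \<times> nat \<Rightarrow> complex).
             (\<Sum>p\<in>{0..<nz} \<times> {0..<na}. (cmod (u p))\<^sup>2) = 1 \<and>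
             (\<Sum>p\<in>{0..<nz} \<times> {0..<na}. (cmod (u' p))\<^sup>2) = 1 \<and>
             run (space nx nz na) Or gs (ket (x, 0, 0, False)) =
               (\<lambda>(x', z, a, b). if x' = x then (if b then \<alpha> * u (z, a) else \<beta> * u' (z, a)) else 0) \<and>
             (cmod \<alpha>)\<^sup>2 = sin (real M * \<theta> x) ^ 2 / ((real M)\<^sup>2 * sin (\<theta> x) ^ 2)))"
proof -
  define G where "G = [Query, Fixed (hk nx nz M)] @ itg nx nz M \<chi> (M - 1) @ [Fixed (hk nx nz M), Fixed (flk nx nz M)]"
  show ?thesis
  proof (intro exI[of _ M] exI[of _ G] conjI allI impI)
    show "1 \<le> M" by (rule M)
    show "\<forall>g\<in>set G. gate_ok (space nx nz M) g"
    proof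
      fix g assume "g \<in> set G"
      hence "g = Query \<or> g = QueryInv \<or> (\<exists>j. g = Fixed (nbk nx nz M \<chi> j)) \<or> (\<exists>j. g = Fixed (nzk nx nz M j))
          \<or> g = Fixed (hk nx nz M) \<or> g = Fixed (flk nx nz M)"
        unfolding G_def using itg_mem[of g nx nz M \<chi> "M - 1"] by auto
      thus "gate_ok (space nx nz M) g"
        using unitary_hk[OF M] unitary_nbk unitary_nzk unitary_flk by auto
    qed
    show "real (num_queries G) \<le> 2 * real M"
      unfolding G_def num_queries_def using M by (simp add: itg_queries)
  next
    fix Or :: "(nat \<times> nat) kernel" and \<theta> :: "nat \<Rightarrow> real" and x :: nat
    assume H: "unitary_on ({0..<nx} \<times> {0..<nz}) Or \<and>
          (\<forall>x<nx. 0 < \<theta> x \<and> \<theta> x \<le> pi / 2 \<and>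
             (\<exists>\<Psi>::nat \<Rightarrow> complex.
                apply_op ({0..<nx} \<times> {0..<nz}) Or (ket (x, 0)) =
                  (\<lambda>(x', z). if x' = x then \<Psi> z else 0) \<and>
                sin (\<theta> x) ^ 2 = (\<Sum>z\<in>{z. z < nz \<and> \<chi> z}. (cmod (\<Psi> z))\<^sup>2)))"
      and x: "x < nx"
    have U: "unitary_on ({0..<nx} \<times> {0..<nz}) Or" using H by blast
    obtain \<Psi>' where P1: "apply_op ({0..<nx} \<times> {0..<nz}) Or (ket (x, 0)) = (\<lambda>(x', z). if x' = x then \<Psi>' z else 0)"
      and P2: "sin (\<theta> x) ^ 2 = (\<Sum>z\<in>{z. z < nz \<and> \<chi> z}. (cmod (\<Psi>' z))\<^sup>2)"
      using H x by blast
    have th: "0 < \<theta> x" "\<theta> x \<le> pi / 2" using H x by auto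
    have sp: "0 < sin (\<theta> x)" using th by (intro sin_gt_zero) auto
    have nz0: "0 < nz"
    proof (rule ccontr)
      assume "\<not> 0 < nz"
      hence "nz = 0" by simp
      thus False using P2 sp by simp
    qed
    have colf: "Or (y,z) (x',0) = (if y = x' then Or (x',z) (x',0) else 0)"
      if cr: "x' < nx" "y < nx" "z < nz" for x' y z
    proof -
      obtain \<Psi>'' where Q: "apply_op ({0..<nx} \<times> {0..<nz}) Or (ket (x', 0)) = (\<lambda>(x'', z). if x'' = x' then \<Psi>'' z else 0)"
        using H cr(1) by blast
      have "Or (y,z) (x',0) = (if y = x' then \<Psi>'' z else 0)"
        using Q apply_ket0[OF cr(1) nz0 cr(2,3), of Or] by (metis (mono_tags, lifting) case_prod_conv)
      moreover have "Or (x',z) (x',0) = \<Psi>'' z"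
        using Q apply_ket0[OF cr(1) nz0 cr(1,3), of Or] by (metis (mono_tags, lifting) case_prod_conv)
      ultimately show ?thesis by simp
    qed
    interpret alg nx nz \<chi> M Or
      by unfold_locales (use M U nz0 colf in auto)
    have PsiEq: "\<Psi>' z = \<Psi> x z" if "z < nz" for z
    proof -
      have "apply_op ({0..<nx} \<times> {0..<nz}) Or (ket (x, 0)) (x,z) = \<Psi>' z" using P1 by simp
      thus ?thesis using apply_ket0[OF x nz0 x that, of Or] unfolding \<Psi>_def by simp
    qed
    have s1: "s1r x = (sin (\<theta> x))\<^sup>2"
    proof -
      have e: "{z. z < nz \<and> \<chi> z} = {z \<in> {..<nz}. \<chi> z}" by auto
      have "(\<Sum>z\<in>{z. z < nz \<and> \<chi> z}. (cmod (\<Psi>' z))\<^sup>2) = (\<Sum>z\<in>{z. z < nz \<and> \<chi> z}. (cmod (\<Psi> x z))\<^sup>2)"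
        by (intro sum.cong) (auto simp: PsiEq)
      also have "\<dots> = (\<Sum>z\<in>{z \<in> {..<nz}. \<chi> z}. (cmod (\<Psi> x z))\<^sup>2)"
        by (rule sum.cong[OF e refl])
      also have "\<dots> = s1r x" unfolding s1r_def by (rule sum.inter_filter) simp
      finally show ?thesis using P2 by simp
    qed
    have tot: "(\<Sum>z<nz. (cmod (\<Psi> x z))\<^sup>2) = 1"
    proof -
      have "(\<Sum>k\<in>{0..<nx} \<times> {0..<nz}. cnj (Or k (x,0)) * Or k (x,0)) = 1"
        using U x nz0 unfolding unitary_on_def by auto
      hence "(\<Sum>y<nx. \<Sum>z<nz. cnj (Or (y,z) (x,0)) * Or (y,z) (x,0)) = 1" by (simp add: sum_S0)
      moreover have "(\<Sum>y<nx. \<Sum>z<nz. cnj (Or (y,z) (x,0)) * Or (y,z) (x,0)) = (\<Sum>y<nx. if y = x then (\<Sum>z<nz. complex_of_real ((cmod (\<Psi> x z))\<^sup>2)) else 0)"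
        by (intro sum.cong refl) (auto simp: col_Psi x mult.commute[of "cnj _"] mult_cnj_cmod)
      ultimately have "complex_of_real (\<Sum>z<nz. (cmod (\<Psi> x z))\<^sup>2) = 1" using x by (simp add: of_real_sum)
      thus ?thesis by (metis of_real_1 of_real_eq_iff)
    qed
    have s0: "s0r x = (cos (\<theta> x))\<^sup>2"
    proof -
      have "s1r x + s0r x = (\<Sum>z<nz. (cmod (\<Psi> x z))\<^sup>2)"
        unfolding s1r_def s0r_def sum.distrib[symmetric] by (intro sum.cong) auto
      thus ?thesis using tot s1 by (simp add: cos_squared_eq)
    qed
    define GT where "GT p = fin x (Ffin x) (x, fst p, snd p, True)" for p
    define GF where "GF p = fin x (Ffin x) (x, fst p, snd p, False)" for p
    have finT: "finite ({0..<nz} \<times> {0..<M})" by simp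
    have t0: "(0,0) \<in> {0..<nz} \<times> {0..<M}" using nz0 M by simp
    have outT: "GT p = 0" if "p \<notin> {0..<nz} \<times> {0..<M}" for p
      using that by (cases p) (auto simp: GT_def fin_def)
    have outF: "GF p = 0" if "p \<notin> {0..<nz} \<times> {0..<M}" for p
      using that by (cases p) (auto simp: GF_def fin_def)
    obtain \<alpha> u where A1: "(\<Sum>p\<in>{0..<nz} \<times> {0..<M}. (cmod (u p))\<^sup>2) = 1" and A2: "\<forall>p. GT p = \<alpha> * u p"
      and A3: "(cmod \<alpha>)\<^sup>2 = (\<Sum>p\<in>{0..<nz} \<times> {0..<M}. (cmod (GT p))\<^sup>2)"
      using decomp[of "{0..<nz} \<times> {0..<M}" "(0,0)" GT] finT t0 outT by blast
    obtain \<beta> u' where B1: "(\<Sum>p\<in>{0..<nz} \<times> {0..<M}. (cmod (u' p))\<^sup>2) = 1" and B2: "\<forall>p. GF p = \<beta> * u' p"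
      using decomp[of "{0..<nz} \<times> {0..<M}" "(0,0)" GF] finT t0 outF by blast
    show "\<exists>\<alpha> \<beta> u u'. (\<Sum>p\<in>{0..<nz} \<times> {0..<M}. (cmod (u p))\<^sup>2) = 1 \<and>
             (\<Sum>p\<in>{0..<nz} \<times> {0..<M}. (cmod (u' p))\<^sup>2) = 1 \<and>
             run (space nx nz M) Or G (ket (x, 0, 0, False)) =
               (\<lambda>(x', z, a, b). if x' = x then (if b then \<alpha> * u (z, a) else \<beta> * u' (z, a)) else 0) \<and>
             (cmod \<alpha>)\<^sup>2 = sin (real M * \<theta> x) ^ 2 / ((real M)\<^sup>2 * sin (\<theta> x) ^ 2)"
    proof (intro exI conjI)
      show "(\<Sum>p\<in>{0..<nz} \<times> {0..<M}. (cmod (u p))\<^sup>2) = 1" by (rule A1)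
      show "(\<Sum>p\<in>{0..<nz} \<times> {0..<M}. (cmod (u' p))\<^sup>2) = 1" by (rule B1)
      have r: "run (space nx nz M) Or G (ket (x, 0, 0, False)) = fin x (Ffin x)"
        using run_gs[OF x] unfolding gs_def G_def .
      show "run (space nx nz M) Or G (ket (x, 0, 0, False)) =
               (\<lambda>(x', z, a, b). if x' = x then (if b then \<alpha> * u (z, a) else \<beta> * u' (z, a)) else 0)"
      proof -
        have pt: "fin x (Ffin x) i = (case i of (x', z, a, b) \<Rightarrow> if x' = x then if b then \<alpha> * u (z, a) else \<beta> * u' (z, a) else 0)" for i
        proof -
          obtain x' z a b where i: "i = (x',z,a,b)" by (cases i) auto
          have "GT (z,a) = \<alpha> * u (z,a)" "GF (z,a) = \<beta> * u' (z,a)" using A2 B2 by auto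
          thus ?thesis unfolding i GT_def GF_def by (cases b) (auto simp: fin_def)
        qed
        show ?thesis unfolding r by (rule ext) (rule pt)
      qed
      show "(cmod \<alpha>)\<^sup>2 = sin (real M * \<theta> x) ^ 2 / ((real M)\<^sup>2 * sin (\<theta> x) ^ 2)"
        unfolding A3 GT_def norm_GT s1 s0 using final_trig[OF sp M] by simp
    qed
  qed
qed

theorem lemma4:
  shows "\<exists>c::real. \<forall>(nx::nat) (nz::nat) (\<chi>::nat \<Rightarrow> bool) (M::nat). M \<ge> 1 \<longrightarrow>
    (\<exists>(na::nat) (gs::gate list).
       na \<ge> 1 \<and>
       (\<forall>g\<in>set gs. gate_ok (space nx nz na) g) \<and>
       real (num_queries gs) \<le> c * real M \<and>
       (\<forall>(Or::(nat \<times> nat) kernel) (\<theta>::nat \<Rightarrow> real).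
          unitary_on ({0..<nx} \<times> {0..<nz}) Or \<and>
          (\<forall>x<nx. 0 < \<theta> x \<and> \<theta> x \<le> pi / 2 \<and>
             (\<exists>\<Psi>::nat \<Rightarrow> complex.
                apply_op ({0..<nx} \<times> {0..<nz}) Or (ket (x, 0)) =
                  (\<lambda>(x', z). if x' = x then \<Psi> z else 0) \<and>
                sin (\<theta> x) ^ 2 = (\<Sum>z\<in>{z. z < nz \<and> \<chi> z}. (cmod (\<Psi> z))\<^sup>2)))
          \<longrightarrow>
          (\<forall>x<nx. \<exists>(\<alpha>::complex) (\<beta>::complex) (u::nat \<times> nat \<Rightarrow> complex) (u'::nat \<times> nat \<Rightarrow> complex).
             (\<Sum>p\<in>{0..<nz} \<times> {0..<na}. (cmod (u p))\<^sup>2) = 1 \<and>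
             (\<Sum>p\<in>{0..<nz} \<times> {0..<na}. (cmod (u' p))\<^sup>2) = 1 \<and>
             run (space nx nz na) Or gs (ket (x, 0, 0, False)) =
               (\<lambda>(x', z, a, b). if x' = x then (if b then \<alpha> * u (z, a) else \<beta> * u' (z, a)) else 0) \<and>
             (cmod \<alpha>)\<^sup>2 = sin (real M * \<theta> x) ^ 2 / ((real M)\<^sup>2 * sin (\<theta> x) ^ 2))))"
  using main_lemma by blast

end
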